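(* The sets $C_{p_1},\dots,C_{p_n}$ are pairwise disjoint closed convex subsets of $\mathbb{R}^2$, and $C_{p_i}\subset W_{p_i}:=\{y\in\mathbb{R}^2: y\cdot(p_{i+1}-p_i)\le b_{i+1}-b_i\}\cap\{y\in\mathbb{R}^2: y\cdot(p_{i-1}-p_i)\le b_{i-1}-b_i\}$ for each $i$.
   Context: $n\ge3$; $p_1,\dots,p_n\in\mathbb{R}^2_{(u_1,u_2)}$ are distinct vertices, in counterclockwise order, of a convex polygon with interior $U$; indices mod $n$. $A\ge0$, $V(u)=A+\sum_i\frac{1}{2|u-p_i|}$. For $b_1,\dots,b_n\in\mathbb{R}$, $\varphi:\overline U\to\mathbb{R}$ is the unique continuous convex function, smooth in $U$, with $\det D^2\varphi=V$ in $U$, $\varphi(p_i)=b_i$, and $\varphi$ affine linear on each edge $[p_i,p_{i+1}]$. The subgradient set at a vertex is $C_{p_i}=\{y\in\mathbb{R}^2:\varphi(u)-\varphi(p_i)\ge\langle y,u-p_i\rangle\ \forall u\in\overline U\}$. *)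

theory Defs
  imports "HOL-Analysis.Analysis"
begin

definition pd :: "2 \<Rightarrow> (real^2 \<Rightarrow> real) \<Rightarrow> real^2 \<Rightarrow> real" where
  "pd i f u = deriv (\<lambda>t. f (u + t *\<^sub>R axis i 1)) 0"

fun Ck_on :: "nat \<Rightarrow> (real^2 \<Rightarrow> real) \<Rightarrow> (real^2) set \<Rightarrow> bool" where
  "Ck_on 0 f U = continuous_on U f"
| "Ck_on (Suc k) f U = (continuous_on U f \<and>
     (\<forall>i. (\<forall>u\<in>U. (\<lambda>t. f (u + t *\<^sub>R axis i 1)) differentiable (at 0)) \<and> Ck_on k (pd i f) U))"

definition smooth_on :: "(real^2 \<Rightarrow> real) \<Rightarrow> (real^2) set \<Rightarrow> bool" where
  "smooth_on f U = (\<forall>k. Ck_on k f U)"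

definition hessian :: "(real^2 \<Rightarrow> real) \<Rightarrow> real^2 \<Rightarrow> real^2^2" where
  "hessian f u = (\<chi> i j. pd i (pd j f) u)"

definition cross2 :: "real^2 \<Rightarrow> real^2 \<Rightarrow> real" where
  "cross2 x y = x$1 * y$2 - x$2 * y$1"

text \<open>p 0, ..., p (n-1) are the vertices, in counterclockwise order, of a convex polygon:
  every other vertex lies strictly to the left of each directed edge [p i, p (i+1 mod n)].\<close>
definition ccw_convex_polygon :: "nat \<Rightarrow> (nat \<Rightarrow> real^2) \<Rightarrow> bool" where
  "ccw_convex_polygon n p = (3 \<le> n \<and> (\<forall>i<n. \<forall>j<n. j \<noteq> i \<and> j \<noteq> Suc i mod n \<longrightarrow>
       cross2 (p (Suc i mod n) - p i) (p j - p i) > 0))"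

definition subgrad_vertex :: "(real^2 \<Rightarrow> real) \<Rightarrow> (real^2) set \<Rightarrow> real^2 \<Rightarrow> (real^2) set" where
  "subgrad_vertex \<phi> K q = {y. \<forall>u\<in>K. \<phi> u - \<phi> q \<ge> y \<bullet> (u - q)}"

end

theory Submission
  imports Defs
begin

lemma Ck_cont: "Ck_on k f U \<Longrightarrow> continuous_on U f"
  by (cases k) auto

lemma vec2_decomp: "(v::real^2) = v$1 *\<^sub>R axis 1 1 + v$2 *\<^sub>R axis 2 1"
  by (simp add: vec_eq_iff forall_2 axis_def)

lemma partial_deriv:
  assumes "Ck_on (Suc k) f U" "x + t0 *\<^sub>R axis i 1 \<in> U"
  shows "((\<lambda>t. f (x + t *\<^sub>R axis i 1)) has_real_derivative pd i f (x + t0 *\<^sub>R axis i 1)) (at t0)"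
proof -
  let ?w = "x + t0 *\<^sub>R axis i 1"
  have "(\<lambda>t. f (?w + t *\<^sub>R axis i 1)) differentiable (at 0)" using assms by simp
  hence "((\<lambda>t. f (?w + t *\<^sub>R axis i 1)) has_real_derivative pd i f ?w) (at 0)"
    unfolding pd_def using DERIV_deriv_iff_real_differentiable by blast
  hence "((\<lambda>t. f (?w + (t + (-t0)) *\<^sub>R axis i 1)) has_real_derivative pd i f ?w) (at t0)"
    using DERIV_shift[of "\<lambda>t. f(?w + t *\<^sub>R axis i 1)" "pd i f ?w" t0 "-t0"] by simp
  moreover have "(\<lambda>t. f (?w + (t + (-t0)) *\<^sub>R axis i 1)) = (\<lambda>t. f (x + t *\<^sub>R axis i 1))"
    by (auto simp: algebra_simps)
  ultimately show ?thesis by simp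
qed

lemma mvt_sym:
  fixes g g' :: "real \<Rightarrow> real"
  assumes "\<And>\<tau>. \<bar>\<tau>\<bar> \<le> \<bar>h\<bar> \<Longrightarrow> (g has_real_derivative g' \<tau>) (at \<tau>)"
  shows "\<exists>\<tau>. \<bar>\<tau>\<bar> \<le> \<bar>h\<bar> \<and> g h - g 0 = h * g' \<tau>"
proof (cases "h = 0")
  case True then show ?thesis by auto
next
  case False
  show ?thesis
  proof (cases "h > 0")
    case True
    obtain z where "0 < z" "z < h" "g h - g 0 = (h - 0) * g' z"
      using MVT2[of 0 h g g'] True assms by auto
    then show ?thesis by (intro exI[of _ z]) auto
  next
    case False
    with \<open>h \<noteq> 0\<close> have "h < 0" by auto
    obtain z where "h < z" "z < 0" "g 0 - g h = (0 - h) * g' z"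
      using MVT2[of h 0 g g'] \<open>h < 0\<close> assms by auto
    then show ?thesis by (intro exI[of _ z]) (auto simp: algebra_simps)
  qed
qed

lemma frechet:
  assumes U: "open U" and f: "Ck_on 1 f U" and x: "x \<in> U"
  shows "(f has_derivative (\<lambda>v. v$1 * pd 1 f x + v$2 * pd 2 f x)) (at x)"
  unfolding has_derivative_at_alt
proof (intro conjI allI impI)
  show "bounded_linear (\<lambda>v. v$1 * pd 1 f x + v$2 * pd 2 f x)"
    by (intro bounded_linear_add bounded_linear_compose[OF bounded_linear_mult_left bounded_linear_vec_nth])
  fix e :: real assume e: "e > 0"
  obtain r where r: "r > 0" "ball x r \<subseteq> U" using U x openE by blast
  have c2: "continuous_on U (pd 2 f)" using f by (simp add: Ck_cont)
  then have "isCont (pd 2 f) x" using U x continuous_on_eq_continuous_at by blast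
  then obtain d1 where d1: "d1 > 0" "\<And>z. dist z x < d1 \<Longrightarrow> dist (pd 2 f z) (pd 2 f x) < e/2"
    unfolding continuous_at_eps_delta using e by (meson half_gt_zero)
  have "((\<lambda>t. f (x + t *\<^sub>R axis 1 1)) has_real_derivative pd 1 f (x + 0 *\<^sub>R axis 1 1)) (at 0)"
    using partial_deriv[of 0 f U x 0 1] f x by simp
  then have "((\<lambda>t. f (x + t *\<^sub>R axis 1 1)) has_derivative (\<lambda>h. pd 1 f x * h)) (at 0)"
    by (simp add: has_field_derivative_def)
  then obtain d2 where d2: "d2 > 0" "\<And>t. norm (t - 0) < d2 \<Longrightarrow>
      norm (f (x + t *\<^sub>R axis 1 1) - f (x + 0 *\<^sub>R axis 1 1) - pd 1 f x * (t - 0)) \<le> e/2 * norm (t - 0)"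
    unfolding has_derivative_at_alt using e by (meson half_gt_zero)
  define d where "d = min (r/2) (min (d1/2) d2)"
  have d: "d > 0" using r d1 d2 by (auto simp: d_def)
  show "\<exists>d>0. \<forall>y. norm (y - x) < d \<longrightarrow>
      norm (f y - f x - ((y - x)$1 * pd 1 f x + (y - x)$2 * pd 2 f x)) \<le> e * norm (y - x)"
  proof (intro exI[of _ d] conjI allI impI d)
    fix y assume y: "norm (y - x) < d"
    define h where "h = y - x"
    define z where "z = x + h$1 *\<^sub>R axis 1 1"
    have h1: "\<bar>h$1\<bar> \<le> norm h" and h2: "\<bar>h$2\<bar> \<le> norm h" by (simp_all add: component_le_norm_cart)
    have yz: "y = z + h$2 *\<^sub>R axis 2 1"
      using vec2_decomp[of h] by (simp add: z_def h_def algebra_simps)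
    have near: "norm (z + \<tau> *\<^sub>R axis 2 1 - x) < min r d1" if "\<bar>\<tau>\<bar> \<le> \<bar>h$2\<bar>" for \<tau>
    proof -
      have "norm (z + \<tau> *\<^sub>R axis 2 1 - x) = norm (h$1 *\<^sub>R axis 1 1 + \<tau> *\<^sub>R (axis (2::2) 1 :: real^2))"
        by (simp add: z_def)
      also have "\<dots> \<le> \<bar>h$1\<bar> + \<bar>\<tau>\<bar>" by (rule order_trans[OF norm_triangle_ineq]) simp
      also have "\<dots> \<le> 2 * norm h" using h1 h2 that by auto
      also have "\<dots> < min r d1" using y d_def h_def by auto
      finally show ?thesis .
    qed
    have der: "((\<lambda>t. f (z + t *\<^sub>R axis 2 1)) has_real_derivative pd 2 f (z + \<tau> *\<^sub>R axis 2 1)) (at \<tau>)"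
      if "\<bar>\<tau>\<bar> \<le> \<bar>h$2\<bar>" for \<tau>
    proof (rule partial_deriv[of 0 f U])
      show "Ck_on (Suc 0) f U" using f by simp
      have "z + \<tau> *\<^sub>R axis 2 1 \<in> ball x r" using near[OF that] by (simp add: dist_norm norm_minus_commute)
      then show "z + \<tau> *\<^sub>R axis 2 1 \<in> U" using r by auto
    qed
    obtain \<tau> where tau: "\<bar>\<tau>\<bar> \<le> \<bar>h$2\<bar>"
      "f (z + h$2 *\<^sub>R axis 2 1) - f (z + 0 *\<^sub>R axis 2 1) = h$2 * pd 2 f (z + \<tau> *\<^sub>R axis 2 1)"
      using mvt_sym[of "h$2" "\<lambda>t. f (z + t *\<^sub>R axis 2 1)", OF der] by blast
    have "dist (pd 2 f (z + \<tau> *\<^sub>R axis 2 1)) (pd 2 f x) < e/2"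
      using d1(2) near[OF tau(1)] by (simp add: dist_norm)
    then have A: "\<bar>f y - f z - h$2 * pd 2 f x\<bar> \<le> e/2 * norm h"
    proof -
      assume "dist (pd 2 f (z + \<tau> *\<^sub>R axis 2 1)) (pd 2 f x) < e/2"
      have "f y - f z - h$2 * pd 2 f x = h$2 * (pd 2 f (z + \<tau> *\<^sub>R axis 2 1) - pd 2 f x)"
        using tau yz by (simp add: algebra_simps)
      also have "\<bar>\<dots>\<bar> \<le> norm h * (e/2)"
        unfolding abs_mult using h2 \<open>dist _ _ < e/2\<close> by (intro mult_mono) (auto simp: dist_real_def)
      finally show ?thesis by (simp add: mult.commute)
    qed
    have "norm (h$1) < d2" using h1 y d_def h_def by auto
    then have B: "\<bar>f z - f x - h$1 * pd 1 f x\<bar> \<le> e/2 * norm h"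
      using d2(2)[of "h$1"] h1 e by (force simp: z_def algebra_simps intro: order_trans)
    have "norm (f y - f x - (h$1 * pd 1 f x + h$2 * pd 2 f x)) \<le>
          \<bar>f y - f z - h$2 * pd 2 f x\<bar> + \<bar>f z - f x - h$1 * pd 1 f x\<bar>" by simp
    also have "\<dots> \<le> e * norm h" using A B by simp
    finally show "norm (f y - f x - ((y - x)$1 * pd 1 f x + (y - x)$2 * pd 2 f x)) \<le> e * norm (y - x)"
      by (simp add: h_def)
  qed
qed

lemma norm_two_axes:
  "norm (\<tau> *\<^sub>R axis i (1::real) + \<sigma> *\<^sub>R (axis j 1 :: real^'n)) \<le> \<bar>\<tau>\<bar> + \<bar>\<sigma>\<bar>"
  by (rule order_trans[OF norm_triangle_ineq]) simp

lemma double_diff: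
  assumes f: "Ck_on 2 f U" and r: "ball x r \<subseteq> U" and h: "0 < h" "2*h < r"
  shows "\<exists>\<xi>. norm (\<xi> - x) \<le> 2*h \<and>
     f (x + h *\<^sub>R axis i 1 + h *\<^sub>R axis j 1) - f (x + h *\<^sub>R axis i 1) - f (x + h *\<^sub>R axis j 1) + f x
       = h * (h * pd j (pd i f) \<xi>)"
proof -
  let ?ei = "axis i 1 :: real^2" and ?ej = "axis j 1 :: real^2"
  have inU: "x + \<tau> *\<^sub>R ?ei + \<sigma> *\<^sub>R ?ej \<in> U" if "\<bar>\<tau>\<bar> \<le> h" "\<bar>\<sigma>\<bar> \<le> h" for \<tau> \<sigma>
  proof -
    have "norm (\<tau> *\<^sub>R ?ei + \<sigma> *\<^sub>R ?ej) < r" using norm_two_axes[of \<tau> i \<sigma> j] that h by auto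
    then have "x + \<tau> *\<^sub>R ?ei + \<sigma> *\<^sub>R ?ej \<in> ball x r"
      by (subst mem_ball, subst dist_commute) (simp add: dist_norm add.assoc)
    then show ?thesis using r by auto
  qed
  have f1: "Ck_on (Suc 1) f U" using f by (simp add: numeral_2_eq_2)
  have fi: "Ck_on (Suc 0) (pd i f) U" using f by (simp add: numeral_2_eq_2)
  define a where "a \<tau> = f ((x + h *\<^sub>R ?ej) + \<tau> *\<^sub>R ?ei) - f (x + \<tau> *\<^sub>R ?ei)" for \<tau>
  define a' where "a' \<tau> = pd i f ((x + h *\<^sub>R ?ej) + \<tau> *\<^sub>R ?ei) - pd i f (x + \<tau> *\<^sub>R ?ei)" for \<tau>
  have "(a has_real_derivative a' \<tau>) (at \<tau>)" if "\<bar>\<tau>\<bar> \<le> \<bar>h\<bar>" for \<tau>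
  proof -
    have m1: "(x + h *\<^sub>R ?ej) + \<tau> *\<^sub>R ?ei \<in> U"
      using inU[of \<tau> h] that h by (simp add: algebra_simps)
    have m2: "x + \<tau> *\<^sub>R ?ei \<in> U" using inU[of \<tau> 0] that h by simp
    show ?thesis unfolding a_def a'_def
      by (intro DERIV_diff partial_deriv[OF f1 m1] partial_deriv[OF f1 m2])
  qed
  then obtain \<tau>1 where t1: "\<bar>\<tau>1\<bar> \<le> \<bar>h\<bar>" "a h - a 0 = h * a' \<tau>1"
    using mvt_sym[of h a a'] by blast
  define b where "b \<sigma> = pd i f ((x + \<tau>1 *\<^sub>R ?ei) + \<sigma> *\<^sub>R ?ej)" for \<sigma>
  have "(b has_real_derivative pd j (pd i f) ((x + \<tau>1 *\<^sub>R ?ei) + \<sigma> *\<^sub>R ?ej)) (at \<sigma>)"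
    if "\<bar>\<sigma>\<bar> \<le> \<bar>h\<bar>" for \<sigma>
  proof -
    have m: "(x + \<tau>1 *\<^sub>R ?ei) + \<sigma> *\<^sub>R ?ej \<in> U" using inU[of \<tau>1 \<sigma>] that t1 h by simp
    show ?thesis unfolding b_def by (rule partial_deriv[OF fi m])
  qed
  then obtain \<sigma>1 where s1: "\<bar>\<sigma>1\<bar> \<le> \<bar>h\<bar>"
     "b h - b 0 = h * pd j (pd i f) ((x + \<tau>1 *\<^sub>R ?ei) + \<sigma>1 *\<^sub>R ?ej)"
    using mvt_sym[of h b "\<lambda>\<sigma>. pd j (pd i f) ((x + \<tau>1 *\<^sub>R ?ei) + \<sigma> *\<^sub>R ?ej)"] by blast
  have "a' \<tau>1 = b h - b 0" unfolding a'_def b_def by (simp add: algebra_simps)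
  moreover have "f (x + h *\<^sub>R ?ei + h *\<^sub>R ?ej) - f (x + h *\<^sub>R ?ei) - f (x + h *\<^sub>R ?ej) + f x = a h - a 0"
    unfolding a_def by (simp add: algebra_simps)
  moreover have "norm ((x + \<tau>1 *\<^sub>R ?ei + \<sigma>1 *\<^sub>R ?ej) - x) \<le> 2*h"
    using norm_two_axes[of \<tau>1 i \<sigma>1 j] t1 s1 h by simp
  ultimately show ?thesis using t1 s1 by (intro exI[of _ "x + \<tau>1 *\<^sub>R ?ei + \<sigma>1 *\<^sub>R ?ej"]) auto
qed

lemma abs_trick: "\<bar>a - c\<bar> < \<bar>c - d\<bar> / 2 \<Longrightarrow> \<bar>b - d\<bar> < \<bar>c - d\<bar> / 2 \<Longrightarrow> b = a \<Longrightarrow> False"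
  for a b c d :: real
proof -
  assume h: "\<bar>a - c\<bar> < \<bar>c - d\<bar> / 2" "\<bar>b - d\<bar> < \<bar>c - d\<bar> / 2" "b = a"
  have "\<bar>c - d\<bar> \<le> \<bar>c - a\<bar> + \<bar>a - d\<bar>" using abs_triangle_ineq[of "c-a" "a-d"] by simp
  then show False using h by (simp add: abs_minus_commute)
qed

lemma schwarz:
  assumes U: "open U" and f: "Ck_on 2 f U" and x: "x \<in> U"
  shows "pd i (pd j f) x = pd j (pd i f) x"
proof (rule ccontr)
  assume ne: "pd i (pd j f) x \<noteq> pd j (pd i f) x"
  define \<delta> where "\<delta> = \<bar>pd i (pd j f) x - pd j (pd i f) x\<bar>"
  have \<delta>: "\<delta> > 0" using ne by (simp add: \<delta>_def)
  obtain r where r: "r > 0" "ball x r \<subseteq> U" using U x openE by blast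
  have c1: "continuous_on U (pd i (pd j f))" "continuous_on U (pd j (pd i f))"
    using f by (simp_all add: numeral_2_eq_2 Ck_cont)
  then have "isCont (pd i (pd j f)) x" "isCont (pd j (pd i f)) x"
    using U x continuous_on_eq_continuous_at by blast+
  then have C1: "\<forall>e>0. \<exists>d>0. \<forall>z. dist z x < d \<longrightarrow> dist (pd i (pd j f) z) (pd i (pd j f) x) < e"
    and C2: "\<forall>e>0. \<exists>d>0. \<forall>z. dist z x < d \<longrightarrow> dist (pd j (pd i f) z) (pd j (pd i f) x) < e"
    unfolding continuous_at_eps_delta by blast+
  have "\<delta>/2 > 0" using \<delta> by simp
  obtain d1 where d1: "d1 > 0" "\<And>z. dist z x < d1 \<Longrightarrow> dist (pd i (pd j f) z) (pd i (pd j f) x) < \<delta>/2"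
    using C1[rule_format, OF \<open>\<delta>/2 > 0\<close>] by blast
  obtain d2 where d2: "d2 > 0" "\<And>z. dist z x < d2 \<Longrightarrow> dist (pd j (pd i f) z) (pd j (pd i f) x) < \<delta>/2"
    using C2[rule_format, OF \<open>\<delta>/2 > 0\<close>] by blast
  define h where "h = min (r/4) (min (d1/4) (d2/4))"
  have h: "h > 0" "2*h < r" "2*h < d1" "2*h < d2" using r d1 d2 by (auto simp: h_def)
  obtain \<xi> where xi: "norm (\<xi> - x) \<le> 2*h"
     "f (x + h *\<^sub>R axis i 1 + h *\<^sub>R axis j 1) - f (x + h *\<^sub>R axis i 1) - f (x + h *\<^sub>R axis j 1) + f x
       = h * (h * pd j (pd i f) \<xi>)"
    using double_diff[OF f r(2) h(1,2), of i j] by blast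
  obtain \<eta> where eta: "norm (\<eta> - x) \<le> 2*h"
     "f (x + h *\<^sub>R axis j 1 + h *\<^sub>R axis i 1) - f (x + h *\<^sub>R axis j 1) - f (x + h *\<^sub>R axis i 1) + f x
       = h * (h * pd i (pd j f) \<eta>)"
    using double_diff[OF f r(2) h(1,2), of j i] by blast
  have "h * (h * pd j (pd i f) \<xi>) = h * (h * pd i (pd j f) \<eta>)"
    using xi(2) eta(2) by (simp add: algebra_simps)
  then have eq: "pd j (pd i f) \<xi> = pd i (pd j f) \<eta>" using h by simp
  have "dist (pd i (pd j f) \<eta>) (pd i (pd j f) x) < \<delta>/2" using d1(2)[of \<eta>] eta h by (simp add: dist_norm)
  moreover have "dist (pd j (pd i f) \<xi>) (pd j (pd i f) x) < \<delta>/2" using d2(2)[of \<xi>] xi h by (simp add: dist_norm)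
  ultimately show False using eq abs_trick unfolding \<delta>_def dist_real_def by metis
qed

definition gdir :: "(real^2 \<Rightarrow> real) \<Rightarrow> real^2 \<Rightarrow> real^2 \<Rightarrow> real" where
  "gdir f D x = D$1 * pd 1 f x + D$2 * pd 2 f x"

definition qform :: "(real^2 \<Rightarrow> real) \<Rightarrow> real^2 \<Rightarrow> real^2 \<Rightarrow> real^2 \<Rightarrow> real" where
  "qform f D E x = D$1 * (E$1 * pd 1 (pd 1 f) x + E$2 * pd 2 (pd 1 f) x)
                 + D$2 * (E$1 * pd 1 (pd 2 f) x + E$2 * pd 2 (pd 2 f) x)"

lemma line_deriv:
  assumes U: "open U" and f: "Ck_on 1 f U" and m: "x0 + s *\<^sub>R D \<in> U"
  shows "((\<lambda>s. f (x0 + s *\<^sub>R D)) has_real_derivative gdir f D (x0 + s *\<^sub>R D)) (at s)"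
proof -
  have l: "((\<lambda>s. x0 + s *\<^sub>R D) has_derivative (\<lambda>h. h *\<^sub>R D)) (at s)"
    by (auto intro!: derivative_eq_intros)
  have "((\<lambda>s. f (x0 + s *\<^sub>R D)) has_derivative
      (\<lambda>h. (h *\<^sub>R D)$1 * pd 1 f (x0 + s *\<^sub>R D) + (h *\<^sub>R D)$2 * pd 2 f (x0 + s *\<^sub>R D))) (at s)"
    using has_derivative_compose[OF l frechet[OF U f m]] by simp
  then show ?thesis unfolding has_field_derivative_def gdir_def
    by (rule has_derivative_eq_rhs) (auto simp: algebra_simps)
qed

lemma line_deriv2:
  assumes U: "open U" and f: "Ck_on 2 f U" and m: "x0 + s *\<^sub>R E \<in> U"
  shows "((\<lambda>s. gdir f D (x0 + s *\<^sub>R E)) has_real_derivative qform f D E (x0 + s *\<^sub>R E)) (at s)"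
proof -
  have f1: "Ck_on 1 (pd 1 f) U" "Ck_on 1 (pd 2 f) U" using f by (simp_all add: numeral_2_eq_2)
  show ?thesis unfolding gdir_def qform_def
    using line_deriv[OF U f1(1) m] line_deriv[OF U f1(2) m]
    by (auto intro!: derivative_eq_intros simp: gdir_def)
qed

lemma lagrange2:
  fixes a c d D1 D2 E1 E2 :: real
  shows "(D1 * (D1 * a + D2 * c) + D2 * (D1 * c + D2 * d)) *
     (E1 * (E1 * a + E2 * c) + E2 * (E1 * c + E2 * d)) -
     (D1 * (E1 * a + E2 * c) + D2 * (E1 * c + E2 * d))^2 =
     (a * d - c * c) * (D1 * E2 - D2 * E1)^2"
  by (simp add: power2_eq_square algebra_simps)

lemma qform_identity:
  assumes U: "open U" and f: "Ck_on 2 f U" and x: "x \<in> U"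
  shows "qform f D D x * qform f E E x - (qform f D E x)^2 = det (hessian f x) * (cross2 D E)^2"
proof -
  have s: "pd 1 (pd 2 f) x = pd 2 (pd 1 f) x" using schwarz[OF U f x] .
  obtain a b c d where abcd: "pd 1 (pd 1 f) x = a" "pd 2 (pd 1 f) x = b" "pd 1 (pd 2 f) x = c" "pd 2 (pd 2 f) x = d"
    by blast
  have "b = c" using s abcd by simp
  then show ?thesis unfolding qform_def det_2 hessian_def cross2_def
    by (simp only: vec_lambda_beta abcd lagrange2)
qed


lemma core_contradiction:
  fixes g gs gt gss gtt :: "real \<Rightarrow> real \<Rightarrow> real" and K0 c :: real
  assumes c: "c > 0" and K0: "K0 \<ge> 0"
    and bnd: "\<And>s t. 0 \<le> s \<Longrightarrow> 0 \<le> t \<Longrightarrow> s + t \<le> 1 \<Longrightarrow> 0 \<le> g s t \<and> g s t \<le> t * K0"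
    and tan_s: "\<And>s t s'. 0 < s \<Longrightarrow> 0 < t \<Longrightarrow> s + t < 1 \<Longrightarrow> 0 \<le> s' \<Longrightarrow> s' + t \<le> 1 \<Longrightarrow>
                  g s' t - g s t \<ge> gs s t * (s' - s)"
    and tan_t: "\<And>s t t'. 0 < s \<Longrightarrow> 0 < t \<Longrightarrow> s + t < 1 \<Longrightarrow> 0 \<le> t' \<Longrightarrow> s + t' \<le> 1 \<Longrightarrow>
                  g s t' - g s t \<ge> gt s t * (t' - t)"
    and ds: "\<And>s t. 0 < s \<Longrightarrow> 0 < t \<Longrightarrow> s + t < 1 \<Longrightarrow> ((\<lambda>s. gs s t) has_real_derivative gss s t) (at s)"
    and dt: "\<And>s t. 0 < s \<Longrightarrow> 0 < t \<Longrightarrow> s + t < 1 \<Longrightarrow> ((\<lambda>t. gt s t) has_real_derivative gtt s t) (at t)"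
    and pos: "\<And>s t. 0 < s \<Longrightarrow> 0 < t \<Longrightarrow> s + t < 1 \<Longrightarrow> gss s t \<ge> 0"
    and prod: "\<And>s t. 0 < s \<Longrightarrow> 0 < t \<Longrightarrow> s + t < 1 \<Longrightarrow> gss s t * gtt s t \<ge> c"
    and cont: "continuous_on {(s,t). 0 < s \<and> 0 < t \<and> s + t < 1} (\<lambda>(s,t). gtt s t)"
  shows False
proof -
  define M where "M = K0 + 1"
  have M: "M > 0" "K0 \<le> M" using K0 by (auto simp: M_def)
  have gs_bd: "gs (1/2) t - gs (1/4) t \<le> 8*M*t" if t: "0 < t" "t \<le> 1/4" for t
  proof -
    have a: "g (3/4) t - g (1/2) t \<ge> gs (1/2) t / 4"
      using tan_s[of "1/2" t "3/4"] t by auto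
    have b: "g 0 t - g (1/4) t \<ge> - (gs (1/4) t / 4)"
      using tan_s[of "1/4" t 0] t by auto
    have "g (3/4) t \<le> t * K0" "g (1/2) t \<ge> 0" "g 0 t \<le> t*K0" "g (1/4) t \<ge> 0"
      using bnd[of "3/4" t] bnd[of "1/2" t] bnd[of 0 t] bnd[of "1/4" t] t by auto
    moreover have "t * K0 \<le> t * M" using M t by (intro mult_left_mono) auto
    ultimately have "gs (1/2) t \<le> 4*(t*M)" "gs (1/4) t \<ge> -4*(t*M)" using a b by linarith+
    then show ?thesis by (simp add: algebra_simps)
  qed
  have int_ss: "((\<lambda>s. gss s t) has_integral (gs (1/2) t - gs (1/4) t)) {1/4..1/2}"
    if t: "0 < t" "t \<le> 1/4" for t
  proof (rule fundamental_theorem_of_calculus)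
    fix s assume "s \<in> {1/4..1/2::real}"
    then have "((\<lambda>s. gs s t) has_real_derivative gss s t) (at s)" using ds[of s t] t by auto
    then show "((\<lambda>s. gs s t) has_vector_derivative gss s t) (at s within {1/4..1/2})"
      by (simp add: has_real_derivative_iff_has_vector_derivative has_vector_derivative_at_within)
  qed auto
  have cont_s: "continuous_on {1/4..1/2} (\<lambda>s. gtt s t)" if t: "0 < t" "t \<le> 1/4" for t
  proof -
    have "continuous_on {1/4..1/2} ((\<lambda>(s,t). gtt s t) \<circ> (\<lambda>s. (s,t)))"
      by (rule continuous_on_compose[OF continuous_on_Pair[OF continuous_on_id continuous_on_const]
            continuous_on_subset[OF cont]]) (use t in auto)
    then show ?thesis by (simp add: o_def)
  qed
  have lower: "integral {1/4..1/2} (\<lambda>s. gtt s t) \<ge> c / (128*M*t)" if t: "0 < t" "t \<le> 1/4" for t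
  proof -
    define l where "l = 1 / (32*M*t)"
    have l: "l > 0" using M t by (auto simp: l_def)
    have pw: "gtt s t \<ge> c * (2*l - l^2 * gss s t)" if s: "s \<in> {1/4..1/2}" for s
    proof -
      have in_: "0 < s" "0 < t" "s + t < 1" using s t by auto
      have gp: "gss s t > 0"
      proof -
        have "gss s t \<noteq> 0" using prod[OF in_] c by auto
        then show ?thesis using pos[OF in_] by auto
      qed
      have "gtt s t \<ge> c / gss s t" using prod[OF in_] gp by (simp add: divide_le_eq mult.commute)
      moreover have "c / gss s t - c * (2*l - l^2 * gss s t) = c * (1 - l * gss s t)^2 / gss s t"
        using gp by (simp add: field_simps power2_eq_square)
      moreover have "c * (1 - l * gss s t)^2 / gss s t \<ge> 0" using gp c by auto
      ultimately show ?thesis by linarith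
    qed
    have hi: "((\<lambda>s. c * (2*l - l^2 * gss s t)) has_integral
               c * (2*l * (1/2 - 1/4) - l^2 * (gs (1/2) t - gs (1/4) t))) {1/4..1/2}"
      using has_integral_mult_right[OF has_integral_diff[OF has_integral_const_real[of "2*l" "1/4" "1/2"]
            has_integral_mult_right[OF int_ss[OF t], of "l^2"]], of c]
      by (simp add: algebra_simps)
    have "integral {1/4..1/2} (\<lambda>s. c * (2*l - l^2 * gss s t)) \<le> integral {1/4..1/2} (\<lambda>s. gtt s t)"
      using hi pw integrable_continuous_interval[OF cont_s[OF t]]
      by (intro integral_le) auto
    moreover have "c * (2*l * (1/2 - 1/4) - l^2 * (gs (1/2) t - gs (1/4) t)) \<ge> c / (128*M*t)"
    proof -
      have "l^2 * (gs (1/2) t - gs (1/4) t) \<le> l^2 * (8*M*t)"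
        using gs_bd[OF t] by (intro mult_left_mono) auto
      moreover have "2*l * (1/2 - 1/4) - l^2 * (8*M*t) = 1/(128*M*t)"
        using M t by (simp add: l_def field_simps power2_eq_square)
      ultimately have "2*l * (1/2 - 1/4) - l^2 * (gs (1/2) t - gs (1/4) t) \<ge> 1/(128*M*t)" by linarith
      then have "c * (1/(128*M*t)) \<le> c * (2*l * (1/2 - 1/4) - l^2 * (gs (1/2) t - gs (1/4) t))"
        using c by (intro mult_left_mono) auto
      then show ?thesis by simp
    qed
    ultimately show ?thesis using integral_unique[OF hi] by linarith
  qed
  have upper_inner: "integral {e..1/8} (\<lambda>t. gtt s t) \<le> 2*M"
    if s: "1/4 \<le> s" "s \<le> 1/2" and e: "0 < e" "e \<le> 1/8" for s e
  proof -
    have "((\<lambda>t. gtt s t) has_integral (gt s (1/8) - gt s e)) {e..1/8}"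
    proof (rule fundamental_theorem_of_calculus)
      fix t assume "t \<in> {e..1/8::real}"
      then have "((\<lambda>t. gt s t) has_real_derivative gtt s t) (at t)" using dt[of s t] s e by auto
      then show "((\<lambda>t. gt s t) has_vector_derivative gtt s t) (at t within {e..1/8})"
        by (simp add: has_real_derivative_iff_has_vector_derivative has_vector_derivative_at_within)
    qed (use e in auto)
    then have eq: "integral {e..1/8} (\<lambda>t. gtt s t) = gt s (1/8) - gt s e" by (simp add: integral_unique)
    have a: "g s (1/4) - g s (1/8) \<ge> gt s (1/8) * (1/4 - 1/8)" using tan_t[of s "1/8" "1/4"] s by auto
    have b: "g s 0 - g s e \<ge> gt s e * (0 - e)" using tan_t[of s e 0] s e by auto
    have "g s (1/4) \<le> (1/4) * K0" "g s (1/8) \<ge> 0" "g s 0 \<le> 0" "g s e \<ge> 0"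
      using bnd[of s "1/4"] bnd[of s "1/8"] bnd[of s 0] bnd[of s e] s e by auto
    then have "gt s (1/8) \<le> 2 * K0" "e * gt s e \<ge> 0" using a b by (auto simp: algebra_simps)
    then have "gt s e \<ge> 0" using e by (simp add: zero_le_mult_iff)
    then show ?thesis using eq \<open>gt s (1/8) \<le> 2 * K0\<close> M by linarith
  qed
  define e where "e = (1/8) * exp (-(64*M^2/c) - 1)"
  have "64*M^2/c \<ge> 0" using c by auto
  then have e: "0 < e" "e \<le> 1/8" by (auto simp: e_def)
  have contbox: "continuous_on (cbox (1/4, e) (1/2, 1/8)) (\<lambda>(s,t). gtt s t)"
    by (rule continuous_on_subset[OF cont]) (use e in \<open>auto simp: cbox_Pair_eq\<close>)
  have contbox': "continuous_on (cbox (e, 1/4) (1/8, 1/2)) (\<lambda>(t,s). gtt s t)"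
  proof -
    have "continuous_on (cbox (e, 1/4) (1/8, 1/2)) ((\<lambda>(s,t). gtt s t) \<circ> (\<lambda>x. (snd x, fst x)))"
      by (rule continuous_on_compose[OF _ continuous_on_subset[OF cont]])
         (use e in \<open>auto simp: cbox_Pair_eq intro!: continuous_intros\<close>)
    then show ?thesis by (simp add: o_def case_prod_unfold)
  qed
  have swap: "integral (cbox e (1/8)) (\<lambda>t. integral (cbox (1/4) (1/2)) (\<lambda>s. gtt s t)) =
              integral (cbox (1/4) (1/2)) (\<lambda>s. integral (cbox e (1/8)) (\<lambda>t. gtt s t))"
    using integral_swap_continuous[of e "1/4" "1/8" "1/2" "\<lambda>t s. gtt s t"] contbox' by simp
  have I1: "(\<lambda>t. integral {1/4..1/2} (\<lambda>s. gtt s t)) integrable_on {e..1/8}"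
    using integral_integrable_2dim[OF contbox'] by simp
  have I2: "(\<lambda>s. integral {e..1/8} (\<lambda>t. gtt s t)) integrable_on {1/4..1/2}"
    using integral_integrable_2dim[OF contbox] by simp
  have logint: "((\<lambda>t. c / (128*M*t)) has_integral (c/(128*M) * ln (1/8) - c/(128*M) * ln e)) {e..1/8}"
  proof (rule fundamental_theorem_of_calculus)
    fix t assume t: "t \<in> {e..1/8::real}"
    then have "t > 0" using e by auto
    have "((\<lambda>t. c/(128*M) * ln t) has_real_derivative c/(128*M) * (1/t)) (at t)"
      using \<open>t > 0\<close> M by (auto intro!: derivative_eq_intros)
    then show "((\<lambda>t. c/(128*M) * ln t) has_vector_derivative c / (128*M*t)) (at t within {e..1/8})"
      by (simp add: has_real_derivative_iff_has_vector_derivative has_vector_derivative_at_within)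
  qed (use e in auto)
  have "c/(128*M) * ln (1/8) - c/(128*M) * ln e \<le> integral {e..1/8} (\<lambda>t. integral {1/4..1/2} (\<lambda>s. gtt s t))"
    using logint I1 lower e by (intro has_integral_le[OF logint integrable_integral[OF I1]]) auto
  also have "\<dots> = integral {1/4..1/2} (\<lambda>s. integral {e..1/8} (\<lambda>t. gtt s t))"
    using swap by simp
  also have "\<dots> \<le> integral {1/4..1/2::real} (\<lambda>s. 2*M)"
    using I2 upper_inner e by (intro integral_le) auto
  also have "\<dots> = M/2" by simp
  finally have ineq: "c/(128*M) * ln (1/8) - c/(128*M) * ln e \<le> M/2" .
  have "ln e = ln (1/8) - (64*M^2/c) - 1" unfolding e_def by (subst ln_mult) auto
  then have "ln (1/8) - ln e = 64*M^2/c + 1" by simp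
  have "c/(128*M) * ln (1/8) - c/(128*M) * ln e = c/(128*M) * (ln (1/8) - ln e)"
    by (simp add: right_diff_distrib)
  also have "\<dots> = c/(128*M) * (64*M^2/c + 1)" using \<open>ln (1/8) - ln e = 64*M^2/c + 1\<close> by simp
  also have "\<dots> = M/2 + c/(128*M)" using M c by (simp add: field_simps power2_eq_square)
  finally show False using ineq M c by (smt (verit) divide_pos_pos)
qed


lemma Ck_mono: "Ck_on (Suc k) f U \<Longrightarrow> Ck_on k f U"
proof (induction k arbitrary: f)
  case 0 then show ?case by simp
next
  case (Suc k) then show ?case by (subst Ck_on.simps(2)) (subst (asm) Ck_on.simps(2), blast)
qed

lemma line_restrict:
  fixes \<phi> :: "real^2 \<Rightarrow> real" and a d Pb y :: "real^2"
  assumes U: "open U" and sm: "Ck_on 2 \<phi> U" and conv: "convex_on K \<phi>"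
    and lohi: "lo < hi"
    and inU: "\<And>\<tau>. lo < \<tau> \<Longrightarrow> \<tau> < hi \<Longrightarrow> a + \<tau> *\<^sub>R d \<in> U"
    and inK: "\<And>\<tau>. lo \<le> \<tau> \<Longrightarrow> \<tau> \<le> hi \<Longrightarrow> a + \<tau> *\<^sub>R d \<in> K"
  defines "h \<equiv> \<lambda>\<tau>. \<phi> (a + \<tau> *\<^sub>R d) - \<phi> Pb - y \<bullet> (a + \<tau> *\<^sub>R d - Pb)"
    and "G \<equiv> \<lambda>\<tau>. gdir \<phi> d (a + \<tau> *\<^sub>R d) - y \<bullet> d"
  shows "\<And>\<tau>. lo < \<tau> \<Longrightarrow> \<tau> < hi \<Longrightarrow> (h has_real_derivative G \<tau>) (at \<tau>)"
    and "\<And>\<tau>. lo < \<tau> \<Longrightarrow> \<tau> < hi \<Longrightarrow> (G has_real_derivative qform \<phi> d d (a + \<tau> *\<^sub>R d)) (at \<tau>)"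
    and "\<And>\<tau> \<tau>'. lo < \<tau> \<Longrightarrow> \<tau> < hi \<Longrightarrow> lo \<le> \<tau>' \<Longrightarrow> \<tau>' \<le> hi \<Longrightarrow> h \<tau>' - h \<tau> \<ge> G \<tau> * (\<tau>' - \<tau>)"
    and "\<And>\<tau>. lo < \<tau> \<Longrightarrow> \<tau> < hi \<Longrightarrow> qform \<phi> d d (a + \<tau> *\<^sub>R d) \<ge> 0"
proof -
  have sm1: "Ck_on 1 \<phi> U" using Ck_mono[of 1 \<phi> U] sm by (simp add: numeral_2_eq_2)
  have heq: "h = (\<lambda>\<tau>. \<phi> (a + \<tau> *\<^sub>R d) - (\<phi> Pb + y \<bullet> (a - Pb)) - (y \<bullet> d) * \<tau>)"
    unfolding h_def by (auto simp: inner_diff_right inner_add_right algebra_simps)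
  show D1: "(h has_real_derivative G \<tau>) (at \<tau>)" if "lo < \<tau>" "\<tau> < hi" for \<tau>
  proof -
    have "((\<lambda>\<tau>. \<phi> (a + \<tau> *\<^sub>R d)) has_real_derivative gdir \<phi> d (a + \<tau> *\<^sub>R d)) (at \<tau>)"
      using line_deriv[OF U sm1 inU[OF that]] .
    then have "((\<lambda>\<tau>. \<phi> (a + \<tau> *\<^sub>R d) - (\<phi> Pb + y \<bullet> (a - Pb)) - (y \<bullet> d) * \<tau>) has_real_derivative
        gdir \<phi> d (a + \<tau> *\<^sub>R d) - 0 - (y \<bullet> d) * 1) (at \<tau>)"
      by (intro DERIV_diff DERIV_const DERIV_cmult DERIV_ident)
    then show ?thesis unfolding heq G_def by simp
  qed
  show D2: "(G has_real_derivative qform \<phi> d d (a + \<tau> *\<^sub>R d)) (at \<tau>)" if "lo < \<tau>" "\<tau> < hi" for \<tau>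
  proof -
    have "((\<lambda>\<tau>. gdir \<phi> d (a + \<tau> *\<^sub>R d)) has_real_derivative qform \<phi> d d (a + \<tau> *\<^sub>R d)) (at \<tau>)"
      using line_deriv2[OF U sm inU[OF that]] .
    then have "((\<lambda>\<tau>. gdir \<phi> d (a + \<tau> *\<^sub>R d) - y \<bullet> d) has_real_derivative qform \<phi> d d (a + \<tau> *\<^sub>R d) - 0) (at \<tau>)"
      by (intro DERIV_diff DERIV_const)
    then show ?thesis unfolding G_def by simp
  qed
  have cvx: "convex_on {lo..hi} h"
  proof (rule convex_onI)
    fix t x z :: real assume t: "0 < t" "t < 1" and x: "x \<in> {lo..hi}" and z: "z \<in> {lo..hi}"
    have eqv: "a + ((1 - t) *\<^sub>R x + t *\<^sub>R z) *\<^sub>R d = (1 - t) *\<^sub>R (a + x *\<^sub>R d) + t *\<^sub>R (a + z *\<^sub>R d)"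
      by (simp add: algebra_simps)
    have "\<phi> ((1 - t) *\<^sub>R (a + x *\<^sub>R d) + t *\<^sub>R (a + z *\<^sub>R d)) \<le> (1 - t) * \<phi> (a + x *\<^sub>R d) + t * \<phi> (a + z *\<^sub>R d)"
      using convex_onD[OF conv, of t "a + x *\<^sub>R d" "a + z *\<^sub>R d"] t x z inK by auto
    then show "h ((1 - t) *\<^sub>R x + t *\<^sub>R z) \<le> (1 - t) * h x + t * h z"
      unfolding heq using eqv by (simp add: algebra_simps)
  qed simp
  show TAN: "h \<tau>' - h \<tau> \<ge> G \<tau> * (\<tau>' - \<tau>)" if "lo < \<tau>" "\<tau> < hi" "lo \<le> \<tau>'" "\<tau>' \<le> hi" for \<tau> \<tau>'
  proof (rule convex_on_imp_above_tangent[OF cvx])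
    show "connected {lo..hi}" by simp
    show "\<tau> \<in> interior {lo..hi}" using that by simp
    show "\<tau>' \<in> {lo..hi}" using that by simp
    show "(h has_real_derivative G \<tau>) (at \<tau> within {lo..hi})"
      using D1[OF that(1,2)] by (rule has_field_derivative_at_within)
  qed
  show "qform \<phi> d d (a + \<tau> *\<^sub>R d) \<ge> 0" if t: "lo < \<tau>" "\<tau> < hi" for \<tau>
  proof (rule ccontr)
    assume "\<not> qform \<phi> d d (a + \<tau> *\<^sub>R d) \<ge> 0"
    then have neg: "qform \<phi> d d (a + \<tau> *\<^sub>R d) < 0" by simp
    obtain \<delta> where \<delta>: "\<delta> > 0" "\<And>e. e > 0 \<Longrightarrow> e < \<delta> \<Longrightarrow> G \<tau> > G (\<tau> + e)"
      using DERIV_neg_dec_right[OF D2[OF t] neg] by blast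
    define e where "e = min (\<delta>/2) ((hi - \<tau>)/2)"
    have "e \<le> (hi - \<tau>)/2" unfolding e_def by (rule min.cobounded2)
    then have e: "e > 0" "e < \<delta>" "\<tau> + e < hi" using \<delta> t by (auto simp: e_def)
    have "h (\<tau> + e) - h \<tau> \<ge> G \<tau> * (\<tau> + e - \<tau>)" using TAN[of \<tau> "\<tau> + e"] t e by auto
    moreover have "h \<tau> - h (\<tau> + e) \<ge> G (\<tau> + e) * (\<tau> - (\<tau> + e))" using TAN[of "\<tau> + e" \<tau>] t e by auto
    ultimately have "e * (G (\<tau> + e) - G \<tau>) \<ge> 0" by (simp add: algebra_simps)
    then have "G (\<tau> + e) \<ge> G \<tau>" using e by (simp add: zero_le_mult_iff)
    then show False using \<delta>(2)[OF e(1,2)] by simp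
  qed
qed

lemma cross2_self: "cross2 E E = 0" by (simp add: cross2_def)

lemma no_flat_triangle:
  fixes \<phi> :: "real^2 \<Rightarrow> real" and P0 D E y :: "real^2" and K U :: "(real^2) set"
  assumes U: "open U" and sm: "Ck_on 2 \<phi> U" and cr: "cross2 D E \<noteq> 0"
    and inU: "\<And>s t. 0 < s \<Longrightarrow> 0 < t \<Longrightarrow> s + t < 1 \<Longrightarrow> P0 + s *\<^sub>R D + t *\<^sub>R E \<in> U"
    and inK: "\<And>s t. 0 \<le> s \<Longrightarrow> 0 \<le> t \<Longrightarrow> s + t \<le> 1 \<Longrightarrow> P0 + s *\<^sub>R D + t *\<^sub>R E \<in> K"
    and conv: "convex_on K \<phi>"
    and above: "\<And>u. u \<in> K \<Longrightarrow> \<phi> u - \<phi> P0 \<ge> y \<bullet> (u - P0)"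
    and base: "\<And>s. 0 \<le> s \<Longrightarrow> s \<le> 1 \<Longrightarrow> \<phi> (P0 + s *\<^sub>R D) - \<phi> P0 \<le> y \<bullet> (s *\<^sub>R D)"
    and det: "\<And>u. u \<in> U \<Longrightarrow> det (hessian \<phi> u) \<ge> 1 / (2 * norm (u - P0))"
  shows False
proof -
  define X where "X s t = P0 + s *\<^sub>R D + t *\<^sub>R E" for s t
  define g where "g s t = \<phi> (X s t) - \<phi> P0 - y \<bullet> (X s t - P0)" for s t
  define gs where "gs s t = gdir \<phi> D (X s t) - y \<bullet> D" for s t
  define gt where "gt s t = gdir \<phi> E (X s t) - y \<bullet> E" for s t
  define gss where "gss s t = qform \<phi> D D (X s t)" for s t
  define gtt where "gtt s t = qform \<phi> E E (X s t)" for s t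
  define c where "c = (cross2 D E)^2 / (2 * (norm D + norm E))"
  define K0 where "K0 = g 0 1"
  have XsA: "X s t = (P0 + t *\<^sub>R E) + s *\<^sub>R D" for s t by (simp add: X_def algebra_simps)
  have XtA: "X s t = (P0 + s *\<^sub>R D) + t *\<^sub>R E" for s t by (simp add: X_def)
  have iUs: "(P0 + t *\<^sub>R E) + \<tau> *\<^sub>R D \<in> U" if "0 < \<tau>" "\<tau> < 1 - t" "0 < t" for t \<tau>
    using inU[of \<tau> t] that XsA[of \<tau> t] unfolding X_def by simp
  have iKs: "(P0 + t *\<^sub>R E) + \<tau> *\<^sub>R D \<in> K" if "0 \<le> \<tau>" "\<tau> \<le> 1 - t" "0 \<le> t" for t \<tau>
    using inK[of \<tau> t] that XsA[of \<tau> t] unfolding X_def by simp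
  have iUt: "(P0 + s *\<^sub>R D) + \<tau> *\<^sub>R E \<in> U" if "0 < \<tau>" "\<tau> < 1 - s" "0 < s" for s \<tau>
    using inU[of s \<tau>] that by simp
  have iKt: "(P0 + s *\<^sub>R D) + \<tau> *\<^sub>R E \<in> K" if "0 \<le> \<tau>" "\<tau> \<le> 1 - s" "0 \<le> s" for s \<tau>
    using inK[of s \<tau>] that by simp
  have lS: "0 < 1 - t" if "0 < t" "t < 1" for t :: real using that by simp
  have iu1: "\<And>\<tau>. 0 < \<tau> \<Longrightarrow> \<tau> < 1 - t \<Longrightarrow> (P0 + t *\<^sub>R E) + \<tau> *\<^sub>R D \<in> U" if "0 < t" for t
    using iUs that by auto
  have ik1: "\<And>\<tau>. 0 \<le> \<tau> \<Longrightarrow> \<tau> \<le> 1 - t \<Longrightarrow> (P0 + t *\<^sub>R E) + \<tau> *\<^sub>R D \<in> K" if "0 < t" for t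
    using iKs that by auto
  have iu2: "\<And>\<tau>. 0 < \<tau> \<Longrightarrow> \<tau> < 1 - s \<Longrightarrow> (P0 + s *\<^sub>R D) + \<tau> *\<^sub>R E \<in> U" if "0 < s" for s
    using iUt that by auto
  have ik2: "\<And>\<tau>. 0 \<le> \<tau> \<Longrightarrow> \<tau> \<le> 1 - s \<Longrightarrow> (P0 + s *\<^sub>R D) + \<tau> *\<^sub>R E \<in> K" if "0 < s" for s
    using iKt that by auto
  have ds: "((\<lambda>s. gs s t) has_real_derivative gss s t) (at s)" if st: "0 < s" "0 < t" "s + t < 1" for s t
    using line_restrict(2)[OF U sm conv lS iu1 ik1, where \<tau>=s and y=y] st
    unfolding gs_def gss_def XsA by auto
  have dt: "((\<lambda>t. gt s t) has_real_derivative gtt s t) (at t)" if st: "0 < s" "0 < t" "s + t < 1" for s t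
    using line_restrict(2)[OF U sm conv lS iu2 ik2, where \<tau>=t and y=y] st
    unfolding gt_def gtt_def XtA by auto
  have pos: "gss s t \<ge> 0" if st: "0 < s" "0 < t" "s + t < 1" for s t
    using line_restrict(4)[OF U sm conv lS iu1 ik1, where \<tau>=s] st
    unfolding gss_def XsA by auto
  have tan_s: "g s' t - g s t \<ge> gs s t * (s' - s)"
    if st: "0 < s" "0 < t" "s + t < 1" "0 \<le> s'" "s' + t \<le> 1" for s t s'
    using line_restrict(3)[OF U sm conv lS iu1 ik1, where \<tau>=s and \<tau>'=s' and Pb=P0 and y=y] st
    unfolding g_def gs_def XsA by auto
  have tan_t: "g s t' - g s t \<ge> gt s t * (t' - t)"
    if st: "0 < s" "0 < t" "s + t < 1" "0 \<le> t'" "s + t' \<le> 1" for s t t'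
    using line_restrict(3)[OF U sm conv lS iu2 ik2, where \<tau>=t and \<tau>'=t' and Pb=P0 and y=y] st
    unfolding g_def gt_def XtA by auto
  have gnn: "g s t \<ge> 0" if "0 \<le> s" "0 \<le> t" "s + t \<le> 1" for s t
    using above[OF inK[OF that]] unfolding g_def X_def by simp
  have gb: "g s 0 \<le> 0" if "0 \<le> s" "s \<le> 1" for s
    using base[OF that] unfolding g_def X_def by simp
  have K0: "K0 \<ge> 0" unfolding K0_def using gnn[of 0 1] by simp
  have gup: "g s t \<le> t * K0" if st: "0 \<le> s" "0 \<le> t" "s + t \<le> 1" for s t
  proof (cases "t = 1")
    case True then have "s = 0" using st by simp
    then show ?thesis using True by (simp add: K0_def)
  next
    case False
    then have t1: "t < 1" using st by simp
    define s' where "s' = s / (1 - t)"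
    have s'1: "(1 - t) * s' = s" using t1 by (simp add: s'_def)
    have s'r: "0 \<le> s'" "s' \<le> 1" using st t1 by (auto simp: s'_def divide_le_eq)
    have Xeq: "X s t = (1 - t) *\<^sub>R X s' 0 + t *\<^sub>R X 0 1"
    proof -
      have "(1 - t) *\<^sub>R X s' 0 + t *\<^sub>R X 0 1 = P0 + ((1 - t) * s') *\<^sub>R D + t *\<^sub>R E"
        by (simp add: X_def algebra_simps)
      then show ?thesis using s'1 by (simp add: X_def)
    qed
    have cv: "\<phi> (X s t) \<le> (1 - t) * \<phi> (X s' 0) + t * \<phi> (X 0 1)"
    proof -
      have "X s' 0 \<in> K" using inK[of s' 0] s'r by (simp add: X_def)
      moreover have "X 0 1 \<in> K" using inK[of 0 1] by (simp add: X_def)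
      ultimately show ?thesis unfolding Xeq using convex_onD[OF conv, of t "X s' 0" "X 0 1"] st t1
        by auto
    qed
    have lin: "y \<bullet> (X s t - P0) = (1 - t) * (y \<bullet> (X s' 0 - P0)) + t * (y \<bullet> (X 0 1 - P0))"
    proof -
      have "X s t - P0 = (1 - t) *\<^sub>R (X s' 0 - P0) + t *\<^sub>R (X 0 1 - P0)"
        unfolding Xeq by (simp add: algebra_simps)
      then show ?thesis by (simp add: inner_add_right)
    qed
    have "g s t \<le> (1 - t) * g s' 0 + t * g 0 1"
      unfolding g_def using cv lin by (simp add: algebra_simps)
    moreover have "(1 - t) * g s' 0 \<le> 0" using gb[OF s'r] t1 by (simp add: mult_nonneg_nonpos)
    ultimately show ?thesis by (simp add: K0_def)
  qed
  have bnd: "0 \<le> g s t \<and> g s t \<le> t * K0" if "0 \<le> s" "0 \<le> t" "s + t \<le> 1" for s t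
    using gnn[OF that] gup[OF that] by simp
  have D0: "D \<noteq> 0" using cr by (auto simp: cross2_def)
  have nDE: "norm D + norm E > 0" using D0 by (simp add: add_pos_nonneg)
  have c: "c > 0" unfolding c_def using cr nDE by simp
  have prod: "gss s t * gtt s t \<ge> c" if st: "0 < s" "0 < t" "s + t < 1" for s t
  proof -
    have u: "X s t \<in> U" using inU[OF st] by (simp add: X_def)
    have diff: "X s t - P0 = s *\<^sub>R D + t *\<^sub>R E" by (simp add: X_def)
    have nz: "s *\<^sub>R D + t *\<^sub>R E \<noteq> 0"
    proof
      assume "s *\<^sub>R D + t *\<^sub>R E = 0"
      then have "cross2 (s *\<^sub>R D + t *\<^sub>R E) E = 0" by (simp add: cross2_def)
      moreover have "cross2 (s *\<^sub>R D + t *\<^sub>R E) E = s * cross2 D E" by (simp add: cross2_def algebra_simps)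
      ultimately show False using cr st by simp
    qed
    have nle: "norm (s *\<^sub>R D + t *\<^sub>R E) \<le> norm D + norm E"
    proof -
      have "norm (s *\<^sub>R D + t *\<^sub>R E) \<le> s * norm D + t * norm E"
        using norm_triangle_ineq[of "s *\<^sub>R D" "t *\<^sub>R E"] st by simp
      also have "\<dots> \<le> norm D + norm E"
        using st by (intro add_mono mult_left_le_one_le) auto
      finally show ?thesis .
    qed
    have "1 / (2 * (norm D + norm E)) \<le> 1 / (2 * norm (s *\<^sub>R D + t *\<^sub>R E))"
      using nz nle nDE by (intro divide_left_mono) auto
    also have "\<dots> \<le> det (hessian \<phi> (X s t))" using det[OF u] diff by simp
    finally have dl: "1 / (2 * (norm D + norm E)) \<le> det (hessian \<phi> (X s t))" .
    have "c = 1 / (2 * (norm D + norm E)) * (cross2 D E)^2" by (simp add: c_def)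
    also have "\<dots> \<le> det (hessian \<phi> (X s t)) * (cross2 D E)^2"
      using dl by (intro mult_right_mono) auto
    also have "\<dots> = gss s t * gtt s t - (qform \<phi> D E (X s t))^2"
      using qform_identity[OF U sm u, of D E] by (simp add: gss_def gtt_def)
    also have "\<dots> \<le> gss s t * gtt s t" by simp
    finally show ?thesis .
  qed
  define Otri where "Otri = {(s::real, t::real). 0 < s \<and> 0 < t \<and> s + t < 1}"
  have Xc: "continuous_on Otri (\<lambda>p. X (fst p) (snd p))" unfolding X_def by (intro continuous_intros)
  have XU: "(\<lambda>p. X (fst p) (snd p)) ` Otri \<subseteq> U" using inU by (auto simp: Otri_def X_def)
  have hc: "continuous_on Otri (\<lambda>p. pd i (pd j \<phi>) (X (fst p) (snd p)))" for i j
  proof -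
    have "continuous_on U (pd i (pd j \<phi>))" using sm by (simp add: numeral_2_eq_2 Ck_cont)
    then show ?thesis using continuous_on_compose2[OF _ Xc XU] by blast
  qed
  have cont: "continuous_on {(s,t). 0 < s \<and> 0 < t \<and> s + t < 1} (\<lambda>(s,t). gtt s t)"
  proof -
    have "continuous_on Otri (\<lambda>p. qform \<phi> E E (X (fst p) (snd p)))"
      unfolding qform_def by (intro continuous_intros hc)
    then show ?thesis by (simp add: Otri_def gtt_def case_prod_unfold)
  qed
  show False
    using core_contradiction[of c K0 g gs gt gss gtt, OF c K0 bnd tan_s tan_t ds dt pos prod cont] .
qed


lemma cross_decomp:
  assumes "cross2 D E \<noteq> 0"
  shows "w = (cross2 w E / cross2 D E) *\<^sub>R D + (cross2 D w / cross2 D E) *\<^sub>R E"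
proof -
  let ?c = "D$1 * E$2 - D$2 * E$1"
  have c: "?c \<noteq> 0" using assms by (simp add: cross2_def)
  have e1: "(w$1*E$2 - w$2*E$1)/?c * D$1 + (D$1*w$2 - D$2*w$1)/?c * E$1 = w$1"
  proof -
    have "(w$1*E$2 - w$2*E$1)/?c * D$1 + (D$1*w$2 - D$2*w$1)/?c * E$1
        = ((w$1*E$2 - w$2*E$1) * D$1 + (D$1*w$2 - D$2*w$1) * E$1)/?c" by (simp add: add_divide_distrib)
    also have "(w$1*E$2 - w$2*E$1) * D$1 + (D$1*w$2 - D$2*w$1) * E$1 = w$1 * ?c" by (simp add: algebra_simps)
    finally show ?thesis using c by simp
  qed
  have e2: "(w$1*E$2 - w$2*E$1)/?c * D$2 + (D$1*w$2 - D$2*w$1)/?c * E$2 = w$2"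
  proof -
    have "(w$1*E$2 - w$2*E$1)/?c * D$2 + (D$1*w$2 - D$2*w$1)/?c * E$2
        = ((w$1*E$2 - w$2*E$1) * D$2 + (D$1*w$2 - D$2*w$1) * E$2)/?c" by (simp add: add_divide_distrib)
    also have "(w$1*E$2 - w$2*E$1) * D$2 + (D$1*w$2 - D$2*w$1) * E$2 = w$2 * ?c" by (simp add: algebra_simps)
    finally show ?thesis using c by simp
  qed
  show ?thesis using e1 e2 by (simp add: vec_eq_iff forall_2 cross2_def)
qed

lemma tri_in_hull:
  assumes "{P0, P0 + D, P0 + E} \<subseteq> S" "0 \<le> s" "0 \<le> t" "s + t \<le> 1"
  shows "P0 + s *\<^sub>R D + t *\<^sub>R E \<in> convex hull S"
proof -
  have "(1 - s - t) *\<^sub>R P0 + s *\<^sub>R (P0 + D) + t *\<^sub>R (P0 + E) \<in> convex hull {P0, P0 + D, P0 + E}"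
    unfolding convex_hull_3 using assms by (intro CollectI exI[of _ "1 - s - t"] exI[of _ s] exI[of _ t]) auto
  moreover have "(1 - s - t) *\<^sub>R P0 + s *\<^sub>R (P0 + D) + t *\<^sub>R (P0 + E) = P0 + s *\<^sub>R D + t *\<^sub>R E"
    by (simp add: algebra_simps)
  ultimately show ?thesis using hull_mono[OF assms(1)] by auto
qed

lemma tri_in_interior:
  assumes cr: "cross2 D E \<noteq> 0" and S: "{P0, P0 + D, P0 + E} \<subseteq> S"
    and st: "0 < s" "0 < t" "s + t < 1"
  shows "P0 + s *\<^sub>R D + t *\<^sub>R E \<in> interior (convex hull S)"
proof -
  define c where "c = cross2 D E"
  define \<sigma> where "\<sigma> z = cross2 (z - P0) E / c" for z
  define \<tau> where "\<tau> z = cross2 D (z - P0) / c" for z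
  define Ob where "Ob = {z. 0 < \<sigma> z} \<inter> {z. 0 < \<tau> z} \<inter> {z. \<sigma> z + \<tau> z < 1}"
  have c\<sigma>: "continuous_on UNIV \<sigma>" unfolding \<sigma>_def cross2_def by (intro continuous_intros) (use cr in \<open>auto simp: c_def\<close>)
  have c\<tau>: "continuous_on UNIV \<tau>" unfolding \<tau>_def cross2_def by (intro continuous_intros) (use cr in \<open>auto simp: c_def\<close>)
  have "open Ob" unfolding Ob_def
    by (intro open_Int open_Collect_less continuous_intros c\<sigma> c\<tau>)
  moreover have "Ob \<subseteq> convex hull S"
  proof
    fix z assume "z \<in> Ob"
    then have z: "0 < \<sigma> z" "0 < \<tau> z" "\<sigma> z + \<tau> z < 1" by (auto simp: Ob_def)
    have "z - P0 = \<sigma> z *\<^sub>R D + \<tau> z *\<^sub>R E"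
      unfolding \<sigma>_def \<tau>_def c_def by (rule cross_decomp[OF cr])
    then have "z = P0 + \<sigma> z *\<^sub>R D + \<tau> z *\<^sub>R E" by (simp add: algebra_simps)
    then show "z \<in> convex hull S" using tri_in_hull[OF S, of "\<sigma> z" "\<tau> z"] z by simp
  qed
  ultimately have "Ob \<subseteq> interior (convex hull S)" using interior_maximal by blast
  moreover have "P0 + s *\<^sub>R D + t *\<^sub>R E \<in> Ob"
  proof -
    have "\<sigma> (P0 + s *\<^sub>R D + t *\<^sub>R E) = s" "\<tau> (P0 + s *\<^sub>R D + t *\<^sub>R E) = t"
      using cr unfolding \<sigma>_def \<tau>_def c_def by (simp_all add: cross2_def field_simps)
    then show ?thesis using st by (simp add: Ob_def)
  qed
  ultimately show ?thesis by auto
qed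

lemma subgrad_closed_convex:
  "closed (subgrad_vertex \<phi> K q) \<and> convex (subgrad_vertex \<phi> K q)"
proof -
  have eq: "subgrad_vertex \<phi> K q = (\<Inter>u\<in>K. {y. (u - q) \<bullet> y \<le> \<phi> u - \<phi> q})"
    by (auto simp: subgrad_vertex_def inner_commute)
  show ?thesis unfolding eq
    by (intro conjI closed_INT convex_INT ballI closed_halfspace_le convex_halfspace_le)
qed


theorem mainTheorem6:
  fixes n :: nat and p :: "nat \<Rightarrow> real^2" and b :: "nat \<Rightarrow> real"
    and A :: real and \<phi> :: "real^2 \<Rightarrow> real" and U :: "(real^2) set"
  assumes poly: "ccw_convex_polygon n p"
    and U_def: "U = interior (convex hull (p ` {..<n}))"
    and A: "A \<ge> 0"
    and cont: "continuous_on (closure U) \<phi>"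
    and conv: "convex_on (closure U) \<phi>"
    and smooth: "smooth_on \<phi> U"
    and MA: "\<forall>u\<in>U. det (hessian \<phi> u) = A + (\<Sum>i<n. 1 / (2 * norm (u - p i)))"
    and vert: "\<forall>i<n. \<phi> (p i) = b i"
    and edge: "\<forall>i<n. \<forall>t\<in>{0..1::real}.
        \<phi> ((1 - t) *\<^sub>R p i + t *\<^sub>R p (Suc i mod n)) = (1 - t) * b i + t * b (Suc i mod n)"
  shows "(\<forall>i<n. closed (subgrad_vertex \<phi> (closure U) (p i))
              \<and> convex (subgrad_vertex \<phi> (closure U) (p i)))
       \<and> (\<forall>i<n. \<forall>j<n. i \<noteq> j \<longrightarrow>
              subgrad_vertex \<phi> (closure U) (p i) \<inter> subgrad_vertex \<phi> (closure U) (p j) = {})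
       \<and> (\<forall>i<n. subgrad_vertex \<phi> (closure U) (p i) \<subseteq>
              {y. y \<bullet> (p (Suc i mod n) - p i) \<le> b (Suc i mod n) - b i}
            \<inter> {y. y \<bullet> (p ((i + n - 1) mod n) - p i) \<le> b ((i + n - 1) mod n) - b i})"
proof -
  have n3: "3 \<le> n" using poly by (simp add: ccw_convex_polygon_def)
  have crs: "\<And>i j. i < n \<Longrightarrow> j < n \<Longrightarrow> j \<noteq> i \<Longrightarrow> j \<noteq> Suc i mod n \<Longrightarrow>
      cross2 (p (Suc i mod n) - p i) (p j - p i) > 0"
    using poly by (simp add: ccw_convex_polygon_def)
  define H where "H = convex hull (p ` {..<n})"
  have Uo: "open U" using U_def by simp
  have U': "U = interior H" using U_def H_def by simp
  have sm: "Ck_on 2 \<phi> U" using smooth smooth_on_def by blast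
  have s01: "Suc 0 mod n = 1" using n3 by simp
  have c012: "cross2 (p 1 - p 0) (p 2 - p 0) \<noteq> 0" using crs[of 0 2] n3 s01 by simp
  have sub3: "{p i, p i + (p j - p i), p i + (p k - p i)} \<subseteq> p ` {..<n}"
    if "i < n" "j < n" "k < n" for i j k using that by auto
  have intH: "interior H \<noteq> {}"
    using tri_in_interior[OF c012 sub3[of 0 1 2], of "1/3" "1/3"] n3 unfolding H_def by auto
  have clU: "closure U = H"
  proof -
    have "closed H" unfolding H_def
      by (intro compact_imp_closed finite_imp_compact_convex_hull) simp
    then show ?thesis using convex_closure_interior[OF _ intH] U' H_def by simp
  qed
  have pin: "p i \<in> closure U" if "i < n" for i
    using that clU H_def by (auto intro: hull_inc)
  have detb: "det (hessian \<phi> u) \<ge> 1 / (2 * norm (u - p i))" if u: "u \<in> U" and i: "i < n" for u i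
  proof -
    have "1 / (2 * norm (u - p i)) \<le> (\<Sum>i<n. 1 / (2 * norm (u - p i)))"
      using i by (intro member_le_sum) auto
    then show ?thesis using MA u A by simp
  qed
  have P1: "\<forall>i<n. closed (subgrad_vertex \<phi> (closure U) (p i)) \<and> convex (subgrad_vertex \<phi> (closure U) (p i))"
    using subgrad_closed_convex by blast
  have P3: "\<forall>i<n. subgrad_vertex \<phi> (closure U) (p i) \<subseteq>
              {y. y \<bullet> (p (Suc i mod n) - p i) \<le> b (Suc i mod n) - b i}
            \<inter> {y. y \<bullet> (p ((i + n - 1) mod n) - p i) \<le> b ((i + n - 1) mod n) - b i}"
  proof (intro allI impI subsetI)
    fix i y assume i: "i < n" and y: "y \<in> subgrad_vertex \<phi> (closure U) (p i)"
    have i1: "Suc i mod n < n" and i0: "(i + n - 1) mod n < n" using n3 by auto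
    have "\<phi> (p (Suc i mod n)) - \<phi> (p i) \<ge> y \<bullet> (p (Suc i mod n) - p i)"
      using y pin[OF i1] by (auto simp: subgrad_vertex_def)
    moreover have "\<phi> (p ((i + n - 1) mod n)) - \<phi> (p i) \<ge> y \<bullet> (p ((i + n - 1) mod n) - p i)"
      using y pin[OF i0] by (auto simp: subgrad_vertex_def)
    ultimately show "y \<in> {y. y \<bullet> (p (Suc i mod n) - p i) \<le> b (Suc i mod n) - b i}
            \<inter> {y. y \<bullet> (p ((i + n - 1) mod n) - p i) \<le> b ((i + n - 1) mod n) - b i}"
      using vert i i1 i0 by simp
  qed
  have P2: "\<forall>i<n. \<forall>j<n. i \<noteq> j \<longrightarrow>
              subgrad_vertex \<phi> (closure U) (p i) \<inter> subgrad_vertex \<phi> (closure U) (p j) = {}"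
  proof (intro allI impI equals0I)
    fix i j y assume i: "i < n" and j: "j < n" and ij: "i \<noteq> j"
      and y: "y \<in> subgrad_vertex \<phi> (closure U) (p i) \<inter> subgrad_vertex \<phi> (closure U) (p j)"
    have yi: "\<And>u. u \<in> closure U \<Longrightarrow> \<phi> u - \<phi> (p i) \<ge> y \<bullet> (u - p i)"
      and yj: "\<And>u. u \<in> closure U \<Longrightarrow> \<phi> u - \<phi> (p j) \<ge> y \<bullet> (u - p j)"
      using y by (auto simp: subgrad_vertex_def)
    have "\<exists>k<n. cross2 (p j - p i) (p k - p i) \<noteq> 0"
    proof (cases "j = Suc i mod n")
      case True
      define k where "k = Suc j mod n"
      have k: "k < n" using n3 by (simp add: k_def)
      have "k \<noteq> i" "k \<noteq> Suc i mod n" using n3 i True by (auto simp: k_def mod_Suc)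
      then have "cross2 (p (Suc i mod n) - p i) (p k - p i) > 0" using crs[of i k] i k by auto
      then show ?thesis using True k by auto
    next
      case False
      have "cross2 (p (Suc i mod n) - p i) (p j - p i) > 0" using crs[of i j] i j ij False by auto
      moreover have "cross2 (p j - p i) (p (Suc i mod n) - p i) = - cross2 (p (Suc i mod n) - p i) (p j - p i)"
        unfolding cross2_def by (simp add: algebra_simps)
      ultimately have "cross2 (p j - p i) (p (Suc i mod n) - p i) \<noteq> 0" by simp
      then show ?thesis using n3 by (intro exI[of _ "Suc i mod n"]) auto
    qed
    then obtain k where k: "k < n" and crk: "cross2 (p j - p i) (p k - p i) \<noteq> 0" by blast
    show False
    proof (rule no_flat_triangle[OF Uo sm crk, of "p i" "closure U" y])
      show "\<And>s t. 0 < s \<Longrightarrow> 0 < t \<Longrightarrow> s + t < 1 \<Longrightarrow> p i + s *\<^sub>R (p j - p i) + t *\<^sub>R (p k - p i) \<in> U"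
        using tri_in_interior[OF crk sub3[OF i j k]] U' H_def by simp
      show "\<And>s t. 0 \<le> s \<Longrightarrow> 0 \<le> t \<Longrightarrow> s + t \<le> 1 \<Longrightarrow> p i + s *\<^sub>R (p j - p i) + t *\<^sub>R (p k - p i) \<in> closure U"
        using tri_in_hull[OF sub3[OF i j k]] clU H_def by simp
      show "convex_on (closure U) \<phi>" by (rule conv)
      show "\<And>u. u \<in> closure U \<Longrightarrow> \<phi> u - \<phi> (p i) \<ge> y \<bullet> (u - p i)" by (rule yi)
      show "\<And>u. u \<in> U \<Longrightarrow> det (hessian \<phi> u) \<ge> 1 / (2 * norm (u - p i))" using detb i by blast
      fix s :: real assume s: "0 \<le> s" "s \<le> 1"
      have eqp: "p i + s *\<^sub>R (p j - p i) = (1 - s) *\<^sub>R p i + s *\<^sub>R p j" by (simp add: algebra_simps)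
      have cv: "\<phi> (p i + s *\<^sub>R (p j - p i)) \<le> (1 - s) * \<phi> (p i) + s * \<phi> (p j)"
        unfolding eqp using convex_onD[OF conv, of s "p i" "p j"] s pin[OF i] pin[OF j] by auto
      have "\<phi> (p i) - \<phi> (p j) \<ge> y \<bullet> (p i - p j)" using yj[OF pin[OF i]] .
      then have "\<phi> (p j) - \<phi> (p i) \<le> y \<bullet> (p j - p i)" by (simp add: inner_diff_right)
      then have "s * (\<phi> (p j) - \<phi> (p i)) \<le> s * (y \<bullet> (p j - p i))" using s by (intro mult_left_mono) auto
      then show "\<phi> (p i + s *\<^sub>R (p j - p i)) - \<phi> (p i) \<le> y \<bullet> (s *\<^sub>R (p j - p i))"
        using cv by (simp add: algebra_simps)
    qed
  qed
  show ?thesis using P1 P2 P3 by blast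
qed

end
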